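(* For every graph $G$ and every integer $\ell\ge 0$, a set $B\subseteq V(G)$ is an $\ell$-leaky forcing set of $G$ if and only if it is an $\ell$-edge-leaky forcing set of $G$. In particular $\operatorname{Z}_{(\ell)}(G)=\operatorname{Z}'_{(\ell)}(G)$.
   Context: All graphs are finite, simple and undirected. Zero forcing: a blue vertex $u$ with exactly one white neighbor $w$ may force $w$ (color it blue), written $u\to w$. A vertex leak is a vertex not allowed to perform any force; $B$ is an $\ell$-leaky forcing set if for every set of at most $\ell$ vertex leaks, exhaustively applying the forcing rule from initial blue set $B$ (leaks never forcing) colors all of $V(G)$ blue. An edge leak is an edge $xy$ across which no force may be performed (neither $x\to y$ nor $y\to x$); $B$ is an $\ell$-edge-leaky forcing set if for every set of at most $\ell$ edge leaks, $B$ colors all of $V(G)$ blue without forcing across leak edges. $\operatorname{Z}_{(\ell)}(G)$ and $\operatorname{Z}'_{(\ell)}(G)$ are the minimum sizes of an $\ell$-leaky forcing set and of an $\ell$-edge-leaky forcing set, respectively. *)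

theory Defs
  imports Main
begin

definition graph :: "'a set \<Rightarrow> ('a \<Rightarrow> 'a \<Rightarrow> bool) \<Rightarrow> bool" where
  "graph V E \<longleftrightarrow> finite V \<and> (\<forall>x y. E x y \<longrightarrow> x \<in> V \<and> y \<in> V)
     \<and> (\<forall>x y. E x y \<longrightarrow> E y x) \<and> (\<forall>x. \<not> E x x)"

definition edges :: "'a set \<Rightarrow> ('a \<Rightarrow> 'a \<Rightarrow> bool) \<Rightarrow> 'a set set" where
  "edges V E = {{x, y} | x y. x \<in> V \<and> y \<in> V \<and> E x y}"

text \<open>A force u \<rightarrow> w is possible when u is blue, w is a neighbour
of u and every other neighbour of u is already blue (so w is the unique white
neighbour, or already blue). The final colouring of the exhaustive process is
the least set closed under these forces.\<close>
inductive_set force_closure ::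
  "('a \<Rightarrow> 'a \<Rightarrow> bool) \<Rightarrow> ('a \<Rightarrow> 'a \<Rightarrow> bool) \<Rightarrow> 'a set \<Rightarrow> 'a set"
  for E :: "'a \<Rightarrow> 'a \<Rightarrow> bool" and ok :: "'a \<Rightarrow> 'a \<Rightarrow> bool" and B :: "'a set" where
  init: "b \<in> B \<Longrightarrow> b \<in> force_closure E ok B"
| force: "\<lbrakk>u \<in> force_closure E ok B; E u w; ok u w;
           \<forall>x. E u x \<and> x \<noteq> w \<longrightarrow> x \<in> force_closure E ok B\<rbrakk>
          \<Longrightarrow> w \<in> force_closure E ok B"

definition vleak_closure :: "('a \<Rightarrow> 'a \<Rightarrow> bool) \<Rightarrow> 'a set \<Rightarrow> 'a set \<Rightarrow> 'a set" where
  "vleak_closure E L B = force_closure E (\<lambda>u w. u \<notin> L) B"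

definition eleak_closure :: "('a \<Rightarrow> 'a \<Rightarrow> bool) \<Rightarrow> 'a set set \<Rightarrow> 'a set \<Rightarrow> 'a set" where
  "eleak_closure E F B = force_closure E (\<lambda>u w. {u, w} \<notin> F) B"

definition leaky_forcing_set ::
  "'a set \<Rightarrow> ('a \<Rightarrow> 'a \<Rightarrow> bool) \<Rightarrow> nat \<Rightarrow> 'a set \<Rightarrow> bool" where
  "leaky_forcing_set V E l B \<longleftrightarrow> B \<subseteq> V \<and>
     (\<forall>L. L \<subseteq> V \<and> card L \<le> l \<longrightarrow> vleak_closure E L B = V)"

definition edge_leaky_forcing_set ::
  "'a set \<Rightarrow> ('a \<Rightarrow> 'a \<Rightarrow> bool) \<Rightarrow> nat \<Rightarrow> 'a set \<Rightarrow> bool" where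
  "edge_leaky_forcing_set V E l B \<longleftrightarrow> B \<subseteq> V \<and>
     (\<forall>F. F \<subseteq> edges V E \<and> card F \<le> l \<longrightarrow> eleak_closure E F B = V)"

definition Z_leaky :: "'a set \<Rightarrow> ('a \<Rightarrow> 'a \<Rightarrow> bool) \<Rightarrow> nat \<Rightarrow> nat" where
  "Z_leaky V E l = (LEAST k. \<exists>B. leaky_forcing_set V E l B \<and> card B = k)"

definition Z_edge_leaky :: "'a set \<Rightarrow> ('a \<Rightarrow> 'a \<Rightarrow> bool) \<Rightarrow> nat \<Rightarrow> nat" where
  "Z_edge_leaky V E l = (LEAST k. \<exists>B. edge_leaky_forcing_set V E l B \<and> card B = k)"

end

theory Submission
  imports Defs
begin

lemma closure_sub:
  assumes "B \<subseteq> S"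
    and "\<And>u w. u \<in> S \<Longrightarrow> E u w \<Longrightarrow> ok u w \<Longrightarrow> \<forall>x. E u x \<and> x \<noteq> w \<longrightarrow> x \<in> S \<Longrightarrow> w \<in> S"
  shows "force_closure E ok B \<subseteq> S"
proof
  fix x assume "x \<in> force_closure E ok B"
  then show "x \<in> S"
  proof (induct rule: force_closure.induct)
    case (init b) then show ?case using assms(1) by auto
  next
    case (force u w) then show ?case using assms(2)[of u w] by blast
  qed
qed

lemma closure_V:
  assumes "graph V E" "B \<subseteq> V"
  shows "force_closure E ok B \<subseteq> V"
  using assms by (intro closure_sub) (auto simp: graph_def)

lemma fin_edges: "finite V \<Longrightarrow> finite (edges V E)"
proof -
  assume "finite V"
  moreover have "edges V E \<subseteq> Pow V" unfolding edges_def by auto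
  ultimately show ?thesis by (meson finite_Pow_iff rev_finite_subset)
qed

lemma dir1:
  assumes G: "graph V E" and BV: "B \<subseteq> V" and lk: "leaky_forcing_set V E l B"
  shows "edge_leaky_forcing_set V E l B"
  unfolding edge_leaky_forcing_set_def
proof (intro conjI allI impI)
  show "B \<subseteq> V" by fact
  fix F assume FF: "F \<subseteq> edges V E \<and> card F \<le> l"
  define C where "C = eleak_closure E F B"
  have CV: "C \<subseteq> V" unfolding C_def eleak_closure_def using closure_V[OF G BV] .
  define L where "L = {u \<in> C. \<exists>w. w \<notin> C \<and> {u, w} \<in> F}"
  have finF: "finite F" using FF fin_edges G unfolding graph_def by (meson rev_finite_subset)
  define f where "f u = (SOME e. e \<in> F \<and> (\<exists>w. w \<notin> C \<and> e = {u, w}))" for u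
  have fL: "f u \<in> F \<and> (\<exists>w. w \<notin> C \<and> f u = {u, w})" if "u \<in> L" for u
  proof -
    have "\<exists>e. e \<in> F \<and> (\<exists>w. w \<notin> C \<and> e = {u, w})" using that unfolding L_def by auto
    then show ?thesis unfolding f_def by (rule someI_ex)
  qed
  have inj: "inj_on f L"
  proof (rule inj_onI)
    fix u u' assume u: "u \<in> L" and u': "u' \<in> L" and eq: "f u = f u'"
    obtain w where w: "w \<notin> C" "f u = {u, w}" using fL[OF u] by auto
    obtain w' where w': "w' \<notin> C" "f u' = {u', w'}" using fL[OF u'] by auto
    have "u \<in> C" "u' \<in> C" using u u' unfolding L_def by auto
    then show "u = u'" using w w' eq by (auto simp: doubleton_eq_iff)
  qed
  have "card L \<le> card F" using card_inj_on_le[OF inj _ finF] fL by auto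
  hence cL: "card L \<le> l" using FF by simp
  have LV: "L \<subseteq> V" using CV unfolding L_def by auto
  have "vleak_closure E L B = V" using lk cL LV unfolding leaky_forcing_set_def by blast
  moreover have "vleak_closure E L B \<subseteq> C"
    unfolding vleak_closure_def
  proof (rule closure_sub)
    show "B \<subseteq> C" unfolding C_def eleak_closure_def by (auto intro: force_closure.init)
  next
    fix u w assume a: "u \<in> C" "E u w" "u \<notin> L" "\<forall>x. E u x \<and> x \<noteq> w \<longrightarrow> x \<in> C"
    show "w \<in> C"
    proof (rule ccontr)
      assume "w \<notin> C"
      hence "{u, w} \<notin> F" using a unfolding L_def by auto
      have "w \<in> force_closure E (\<lambda>u w. {u, w} \<notin> F) B"
        apply (rule force_closure.force[of u])
        using a \<open>{u, w} \<notin> F\<close> unfolding C_def eleak_closure_def by simp_all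
      hence "w \<in> eleak_closure E F B" unfolding eleak_closure_def .
      then show False using \<open>w \<notin> C\<close> C_def by simp
    qed
  qed
  ultimately show "eleak_closure E F B = V" using CV C_def by auto
qed

lemma dir2:
  assumes G: "graph V E" and BV: "B \<subseteq> V" and lk: "edge_leaky_forcing_set V E l B"
  shows "leaky_forcing_set V E l B"
  unfolding leaky_forcing_set_def
proof (intro conjI allI impI)
  show "B \<subseteq> V" by fact
  fix L assume LL: "L \<subseteq> V \<and> card L \<le> l"
  define C where "C = vleak_closure E L B"
  have CV: "C \<subseteq> V" unfolding C_def vleak_closure_def using closure_V[OF G BV] .
  define P where "P u w \<longleftrightarrow> u \<in> L \<and> u \<in> C \<and> w \<notin> C \<and> E u w \<and> (\<forall>x. E u x \<and> x \<noteq> w \<longrightarrow> x \<in> C)" for u w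
  have uniq: "P u w \<Longrightarrow> P u w' \<Longrightarrow> w = w'" for u w w' unfolding P_def by blast
  have theP: "P u w \<Longrightarrow> (THE w. P u w) = w" for u w using uniq by blast
  define A where "A = {u. \<exists>w. P u w}"
  define F where "F = (\<lambda>u. {u, THE w. P u w}) ` A"
  have finL: "finite L" using LL G unfolding graph_def by (meson rev_finite_subset)
  have AL: "A \<subseteq> L" unfolding A_def P_def by auto
  have "card F \<le> card A" unfolding F_def by (rule card_image_le) (use AL finL in \<open>meson rev_finite_subset\<close>)
  also have "\<dots> \<le> card L" using AL finL by (rule card_mono[rotated])
  finally have cF: "card F \<le> l" using LL by simp
  have FE: "F \<subseteq> edges V E"
  proof
    fix e assume "e \<in> F"
    then obtain u w where "P u w" "e = {u, w}" unfolding F_def A_def using theP by auto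
    then show "e \<in> edges V E" using G unfolding edges_def P_def graph_def by blast
  qed
  have "eleak_closure E F B = V" using lk cF FE unfolding edge_leaky_forcing_set_def by blast
  moreover have "eleak_closure E F B \<subseteq> C"
    unfolding eleak_closure_def
  proof (rule closure_sub)
    show "B \<subseteq> C" unfolding C_def vleak_closure_def by (auto intro: force_closure.init)
  next
    fix u w assume a: "u \<in> C" "E u w" "{u, w} \<notin> F" "\<forall>x. E u x \<and> x \<noteq> w \<longrightarrow> x \<in> C"
    show "w \<in> C"
    proof (rule ccontr)
      assume wC: "w \<notin> C"
      have "u \<notin> L"
      proof
        assume "u \<in> L"
        hence "P u w" using a wC unfolding P_def by auto
        hence "{u, w} \<in> F" unfolding F_def A_def using theP by force
        then show False using a by simp
      qed
      have "w \<in> force_closure E (\<lambda>u w. u \<notin> L) B"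
        apply (rule force_closure.force[of u])
        using a \<open>u \<notin> L\<close> unfolding C_def vleak_closure_def by simp_all
      hence "w \<in> vleak_closure E L B" unfolding vleak_closure_def .
      then show False using wC C_def by simp
    qed
  qed
  ultimately show "vleak_closure E L B = V" using CV C_def by auto
qed

theorem corollary2p4:
  fixes V :: "'a set" and E :: "'a \<Rightarrow> 'a \<Rightarrow> bool" and l :: nat
  assumes "graph V E"
  shows "(\<forall>B. B \<subseteq> V \<longrightarrow>
            (leaky_forcing_set V E l B \<longleftrightarrow> edge_leaky_forcing_set V E l B))
         \<and> Z_leaky V E l = Z_edge_leaky V E l"
proof -
  have eq: "leaky_forcing_set V E l B \<longleftrightarrow> edge_leaky_forcing_set V E l B" for B
  proof (cases "B \<subseteq> V")
    case True then show ?thesis using dir1 dir2 assms by blast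
  next
    case False then show ?thesis unfolding leaky_forcing_set_def edge_leaky_forcing_set_def by auto
  qed
  show ?thesis using eq unfolding Z_leaky_def Z_edge_leaky_def by simp
qed

end
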